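(* Let $f=(f_{ih})_{(i,h)\in S}\in C^1(U,\mathbb R^S)$ for some open $U\supset\Delta$ (here $f$ need not satisfy $\partial f_{ih}/\partial x_{ik}=0$). Then there exists a mutation limit $X\subset\Delta$, and it is contained in a connected component of the set $\mathcal N=\{x\in\Delta: g_{ih}(x)\le 0\ \forall (i,h)\in S\}$ of Nash equilibria.
   Context: Let $I=\{1,\dots,N\}$ be a finite set of populations; population $i$ has the finite type set $S_i=\{1,\dots,n_i\}$. Let $S=\{(i,h): i\in I, h\in S_i\}$, $\Delta_i=\{x_i\in\mathbb R^{n_i}_{\ge 0}:\sum_{h\le n_i}x_{ih}=1\}$, $\Delta=\prod_{i\in I}\Delta_i\subset\mathbb R^S$, and $\operatorname{int}\Delta=\{x\in\Delta: x_{ih}>0 \text{ for all }(i,h)\in S\}$. Put $\bar f_i(x)=\sum_{h\le n_i}x_{ih}f_{ih}(x)$ and $g_{ih}=f_{ih}-\bar f_i$. For $M\ge0$ and $c\in\operatorname{int}\Delta$ define $\phi^M_{ih}(x)=x_{ih}g_{ih}(x)+M(c_{ih}-x_{ih})$; a mutation equilibrium for $M$ (w.r.t. $c$) is $x\in\Delta$ with $\phi^M(x)=0$. A sequence of mutation equilibria for $c$ is a sequence $(x_n)\subset\Delta$ for which there are $M_n>0$, $M_n\to0$, with $\phi^{M_n}(x_n)=0$ for all $n$. A mutation limit is a nonempty connected compact set $X\subset\Delta$ such that for every $c\in\operatorname{int}\Delta$ there is a sequence of mutation equilibria for $c$ converging to an element of $X$, and no proper subset of $X$ is a connected compact set with this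 property. *)

theory Defs
  imports "HOL-Analysis.Analysis"
begin

text \<open>Encoding: the finite set of pure strategies S = {(i,h)} is a finite type 's;
  the population map pop :: 's => 'i assigns to each type (i,h) its population i.\<close>

definition pstate :: "('s::finite \<Rightarrow> 'i) \<Rightarrow> (real^'s) set" where
  "pstate pop = {x. (\<forall>s. 0 \<le> x$s) \<and> (\<forall>i. (\<Sum>s\<in>{s. pop s = i}. x$s) = 1)}"

definition pstate_int :: "('s::finite \<Rightarrow> 'i) \<Rightarrow> (real^'s) set" where
  "pstate_int pop = {x \<in> pstate pop. \<forall>s. 0 < x$s}"

definition avg_payoff :: "('s::finite \<Rightarrow> 'i) \<Rightarrow> (real^'s \<Rightarrow> real^'s) \<Rightarrow> 'i \<Rightarrow> real^'s \<Rightarrow> real" where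
  "avg_payoff pop f i x = (\<Sum>s\<in>{s. pop s = i}. x$s * f x $ s)"

definition gexcess :: "('s::finite \<Rightarrow> 'i) \<Rightarrow> (real^'s \<Rightarrow> real^'s) \<Rightarrow> 's \<Rightarrow> real^'s \<Rightarrow> real" where
  "gexcess pop f s x = f x $ s - avg_payoff pop f (pop s) x"

definition mut_field :: "('s::finite \<Rightarrow> 'i) \<Rightarrow> (real^'s \<Rightarrow> real^'s) \<Rightarrow> real \<Rightarrow> real^'s \<Rightarrow> real^'s \<Rightarrow> real^'s" where
  "mut_field pop f M c x = (\<chi> s. x$s * gexcess pop f s x + M * (c$s - x$s))"

definition mutation_eq_seq :: "('s::finite \<Rightarrow> 'i) \<Rightarrow> (real^'s \<Rightarrow> real^'s) \<Rightarrow> real^'s \<Rightarrow> (nat \<Rightarrow> real^'s) \<Rightarrow> bool" where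
  "mutation_eq_seq pop f c xs \<longleftrightarrow>
     (\<forall>n. xs n \<in> pstate pop) \<and>
     (\<exists>Ms :: nat \<Rightarrow> real. (\<forall>n. 0 < Ms n) \<and> Ms \<longlonglongrightarrow> 0 \<and>
        (\<forall>n. mut_field pop f (Ms n) c (xs n) = 0))"

definition approachable :: "('s::finite \<Rightarrow> 'i) \<Rightarrow> (real^'s \<Rightarrow> real^'s) \<Rightarrow> (real^'s) set \<Rightarrow> bool" where
  "approachable pop f X \<longleftrightarrow>
     (\<forall>c \<in> pstate_int pop. \<exists>xs. mutation_eq_seq pop f c xs \<and> (\<exists>x\<in>X. xs \<longlonglongrightarrow> x))"

definition mutation_limit :: "('s::finite \<Rightarrow> 'i) \<Rightarrow> (real^'s \<Rightarrow> real^'s) \<Rightarrow> (real^'s) set \<Rightarrow> bool" where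
  "mutation_limit pop f X \<longleftrightarrow>
     X \<noteq> {} \<and> connected X \<and> compact X \<and> X \<subseteq> pstate pop \<and> approachable pop f X \<and>
     (\<forall>Y. Y \<subset> X \<and> connected Y \<and> compact Y \<longrightarrow> \<not> approachable pop f Y)"

definition nash_set :: "('s::finite \<Rightarrow> 'i) \<Rightarrow> (real^'s \<Rightarrow> real^'s) \<Rightarrow> (real^'s) set" where
  "nash_set pop f = {x \<in> pstate pop. \<forall>s. gexcess pop f s x \<le> 0}"

end

theory Submission
  imports Defs
begin


lemma minimal_hitting:
  fixes K :: "'a::euclidean_space set" and LL :: "'a set set"
  assumes K: "compact K" "K \<noteq> {}" "Q K" and LLc: "\<And>L. L\<in>LL \<Longrightarrow> closed L"
    and hitK: "\<And>L. L\<in>LL \<Longrightarrow> K \<inter> L \<noteq> {}"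
    and Qch: "\<And>F. F \<noteq> {} \<Longrightarrow> (\<And>S. S\<in>F \<Longrightarrow> compact S \<and> Q S) \<Longrightarrow>
               (\<And>S T. S\<in>F \<Longrightarrow> T\<in>F \<Longrightarrow> S\<subseteq>T \<or> T\<subseteq>S) \<Longrightarrow> Q (\<Inter>F)"
  shows "\<exists>X. X \<subseteq> K \<and> X\<noteq>{} \<and> compact X \<and> Q X \<and> (\<forall>L\<in>LL. X\<inter>L\<noteq>{}) \<and>
     (\<forall>Y. Y \<subseteq> X \<and> Y \<noteq>{} \<and> compact Y \<and> Q Y \<and> (\<forall>L\<in>LL. Y\<inter>L\<noteq>{}) \<longrightarrow> Y = X)"
proof -
  define A where "A = {X. X \<subseteq> K \<and> X\<noteq>{} \<and> compact X \<and> Q X \<and> (\<forall>L\<in>LL. X\<inter>L\<noteq>{})}"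
  have "\<exists>M\<in>uminus`A. \<forall>X\<in>uminus`A. M \<subseteq> X \<longrightarrow> X = M"
  proof (rule subset_Zorn_nonempty)
    show "uminus`A \<noteq> {}" using K hitK unfolding A_def by blast
  next
    fix C assume C: "C\<noteq>{}" "subset.chain (uminus`A) C"
    define F where "F = uminus`C"
    have F: "F \<noteq> {}" "F \<subseteq> A" "\<And>S T. S\<in>F \<Longrightarrow> T\<in>F \<Longrightarrow> S\<subseteq>T \<or> T\<subseteq>S"
      using C unfolding F_def subset.chain_def by auto
    obtain S0 where S0: "S0 \<in> F" using F by blast
    have FA: "\<And>S. S \<in> F \<Longrightarrow> S \<subseteq> K \<and> S\<noteq>{} \<and> compact S \<and> Q S \<and> (\<forall>L\<in>LL. S\<inter>L\<noteq>{})"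
      using F unfolding A_def by blast
    have cF: "compact (\<Inter>F)"
    proof -
      have "\<Inter>F = \<Inter>F \<inter> S0" using S0 by blast
      moreover have "closed (\<Inter>F)" using FA by (meson closed_Inter compact_imp_closed)
      ultimately show ?thesis using FA[OF S0] by (metis closed_Int_compact)
    qed
    have "\<Inter>F \<in> A"
      unfolding A_def
    proof (intro CollectI conjI ballI)
      show "\<Inter>F \<subseteq> K" using S0 FA by blast
      show "compact (\<Inter>F)" by (rule cF)
      show "\<Inter>F \<noteq> {}" by (rule compact_chain) (use FA F in auto)
      show "Q (\<Inter>F)" by (rule Qch) (use FA F in auto)
    next
      fix L assume L: "L \<in> LL"
      have "\<Inter>((\<lambda>S. S\<inter>L)`F) \<noteq> {}"
      proof (rule compact_chain)
        show "\<And>S. S \<in> (\<lambda>S. S \<inter> L) ` F \<Longrightarrow> compact S"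
          using FA LLc[OF L] by (auto intro: compact_Int_closed)
        show "{} \<notin> (\<lambda>S. S \<inter> L) ` F" using FA L by auto
        show "\<And>S T. S \<in> (\<lambda>S. S \<inter> L) ` F \<and> T \<in> (\<lambda>S. S \<inter> L) ` F \<Longrightarrow> S \<subseteq> T \<or> T \<subseteq> S"
          using F(3) by blast
      qed
      moreover have "\<Inter>((\<lambda>S. S\<inter>L)`F) = \<Inter>F \<inter> L" using F(1) by auto
      ultimately show "\<Inter>F \<inter> L \<noteq> {}" by simp
    qed
    moreover have "\<Union>C = - \<Inter>F" unfolding F_def by auto
    ultimately show "\<Union>C \<in> uminus ` A" by auto
  qed
  then obtain X where X: "X \<in> A" and mx: "\<forall>Z\<in>uminus`A. -X \<subseteq> Z \<longrightarrow> Z = -X" by blast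
  show ?thesis
  proof (intro exI conjI allI impI)
    show "X \<subseteq> K" "X\<noteq>{}" "compact X" "Q X" "\<forall>L\<in>LL. X\<inter>L\<noteq>{}" using X unfolding A_def by auto
  next
    fix Y assume Y: "Y \<subseteq> X \<and> Y \<noteq>{} \<and> compact Y \<and> Q Y \<and> (\<forall>L\<in>LL. Y\<inter>L\<noteq>{})"
    then have "Y \<in> A" using X unfolding A_def by auto
    then have "-Y = -X" using mx Y by auto
    then show "Y = X" by simp
  qed
qed



definition zero_lim :: "(real \<Rightarrow> 'a::metric_space \<Rightarrow> bool) \<Rightarrow> 'a set" where
  "zero_lim Z = {x. \<exists>xs Ms. (\<forall>n. 0 < Ms n \<and> Z (Ms n) (xs n)) \<and> Ms \<longlonglongrightarrow> 0 \<and> xs \<longlonglongrightarrow> x}"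

lemma zero_lim_eq:
  "zero_lim Z = (\<Inter>e\<in>{0<..}. closure {y. \<exists>M. 0 < M \<and> M < e \<and> Z M y})"
proof (intro equalityI subsetI)
  fix x assume "x \<in> zero_lim Z"
  then obtain xs Ms where Z: "\<And>n. 0 < Ms n \<and> Z (Ms n) (xs n)" and M: "Ms \<longlonglongrightarrow> 0" and x: "xs \<longlonglongrightarrow> x"
    unfolding zero_lim_def by blast
  show "x \<in> (\<Inter>e\<in>{0<..}. closure {y. \<exists>M. 0 < M \<and> M < e \<and> Z M y})"
  proof
    fix e :: real assume "e \<in> {0<..}"
    then have "e > 0" by simp
    with M have "eventually (\<lambda>n. dist (Ms n) 0 < e) sequentially" by (rule tendstoD)
    then obtain N where N: "\<And>n. n \<ge> N \<Longrightarrow> Ms n < e"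
      using Z by (auto simp: eventually_sequentially dist_real_def) (metis abs_of_pos)
    have "(\<lambda>n. xs (n + N)) \<longlonglongrightarrow> x" using x by (rule LIMSEQ_ignore_initial_segment)
    moreover have "\<forall>n. xs (n + N) \<in> {y. \<exists>M. 0 < M \<and> M < e \<and> Z M y}"
    proof
      fix n show "xs (n + N) \<in> {y. \<exists>M. 0 < M \<and> M < e \<and> Z M y}"
        using Z[of "n+N"] N[of "n+N"] by auto
    qed
    ultimately show "x \<in> closure {y. \<exists>M. 0 < M \<and> M < e \<and> Z M y}"
      unfolding closure_sequential by (intro exI[of _ "\<lambda>n. xs (n + N)"] conjI)
  qed
next
  fix x assume x: "x \<in> (\<Inter>e\<in>{0<..}. closure {y. \<exists>M. 0 < M \<and> M < e \<and> Z M y})"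
  have "\<forall>n. \<exists>y M. 0 < M \<and> M < 1/(Suc n) \<and> Z M y \<and> dist y x < 1/(Suc n)"
  proof
    fix n
    have "x \<in> closure {y. \<exists>M. 0 < M \<and> M < 1/(Suc n) \<and> Z M y}" using x by auto
    then show "\<exists>y M. 0 < M \<and> M < 1/(Suc n) \<and> Z M y \<and> dist y x < 1/(Suc n)"
      unfolding closure_approachable by (simp del: of_nat_Suc) (meson of_nat_0_less_iff zero_less_Suc divide_pos_pos zero_less_one)
  qed
  then obtain xs where "\<forall>n. \<exists>M. 0 < M \<and> M < 1/(Suc n) \<and> Z M (xs n) \<and> dist (xs n) x < 1/(Suc n)"
    unfolding choice_iff by blast
  then obtain Ms where xs: "\<And>n. 0 < Ms n \<and> Ms n < 1/(Suc n) \<and> Z (Ms n) (xs n) \<and> dist (xs n) x < 1/(Suc n)"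
    unfolding choice_iff by blast
  have lim0: "(\<lambda>n. 1/real (Suc n)) \<longlonglongrightarrow> 0"
    using LIMSEQ_inverse_real_of_nat by (simp add: inverse_eq_divide)
  have "Ms \<longlonglongrightarrow> 0"
  proof (rule tendsto_sandwich[of "\<lambda>_. 0" _ _ "\<lambda>n. 1/(Suc n)"])
    show "\<forall>\<^sub>F n in sequentially. 0 \<le> Ms n" by (rule always_eventually) (use xs in \<open>auto intro: less_imp_le\<close>)
    show "\<forall>\<^sub>F n in sequentially. Ms n \<le> 1/(Suc n)" by (rule always_eventually) (use xs in \<open>auto intro: less_imp_le\<close>)
  qed (use lim0 in auto)
  moreover have "xs \<longlonglongrightarrow> x"
  proof (rule tendsto_dist_iff[THEN iffD2], rule tendsto_sandwich[of "\<lambda>_. 0" _ _ "\<lambda>n. 1/(Suc n)"])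
    show "\<forall>\<^sub>F n in sequentially. 0 \<le> dist (xs n) x" by simp
    show "\<forall>\<^sub>F n in sequentially. dist (xs n) x \<le> 1/(Suc n)" by (rule always_eventually) (use xs in \<open>auto intro: less_imp_le\<close>)
  qed (use lim0 in auto)
  ultimately show "x \<in> zero_lim Z" unfolding zero_lim_def using xs by blast
qed

lemma closed_zero_lim: "closed (zero_lim Z)"
  unfolding zero_lim_eq by (auto intro: closed_INT)



definition mfz :: "('s::finite \<Rightarrow> 'i) \<Rightarrow> (real^'s \<Rightarrow> real^'s) \<Rightarrow> real \<Rightarrow> (real^'s \<Rightarrow> real^'s) \<Rightarrow> real^'s \<Rightarrow> real^'s" where
  "mfz pop f M cf x = (\<chi> s. x$s * gexcess pop f s x + M * (cf x $ s - x$s))"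

lemma mfz_const: "mfz pop f M (\<lambda>_. c) = mut_field pop f M c"
  by (simp add: mfz_def mut_field_def fun_eq_iff)

lemma pstate_closed: fixes pop :: "'s::finite \<Rightarrow> 'i" shows "closed (pstate pop)"
proof -
  have "pstate pop = (\<Inter>s. {x. 0 \<le> x$s}) \<inter> (\<Inter>i. {x::real^'s. (\<Sum>s\<in>{s. pop s = i}. x$s) = 1})"
    unfolding pstate_def by auto
  moreover have "closed {x::real^'s. 0 \<le> x$s}" for s
    by (intro closed_Collect_le continuous_intros)
  moreover have "closed {x::real^'s. (\<Sum>s\<in>{s. pop s = i}. x$s) = 1}" for i
    by (intro closed_Collect_eq continuous_intros)
  ultimately show ?thesis by (auto intro!: closed_Int closed_INT)
qed

lemma pstate_le1: "x \<in> pstate pop \<Longrightarrow> x$s \<le> 1"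
proof -
  assume x: "x \<in> pstate pop"
  have "x$s \<le> (\<Sum>t\<in>{t. pop t = pop s}. x$t)"
    by (rule member_le_sum) (use x in \<open>auto simp: pstate_def\<close>)
  also have "\<dots> = 1" using x by (simp add: pstate_def)
  finally show ?thesis .
qed

lemma pstate_compact: fixes pop :: "'s::finite \<Rightarrow> 'i" shows "compact (pstate pop)"
proof -
  have "pstate pop \<subseteq> cbox 0 1"
    by (auto simp: mem_box_cart pstate_le1) (auto simp: pstate_def)
  then have "pstate pop = cbox 0 1 \<inter> pstate pop" by blast
  then show ?thesis using pstate_closed by (metis compact_Int_closed compact_cbox)
qed

lemma pstate_convex: fixes pop :: "'s::finite \<Rightarrow> 'i" shows "convex (pstate pop)"
  unfolding convex_def
proof (intro ballI allI impI)
  fix x y :: "real^'s" and u v :: real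
  assume x: "x \<in> pstate pop" and y: "y \<in> pstate pop" and uv: "0 \<le> u" "0 \<le> v" "u + v = 1"
  show "u *\<^sub>R x + v *\<^sub>R y \<in> pstate pop"
    unfolding pstate_def
  proof (intro CollectI conjI allI)
    fix s show "0 \<le> (u *\<^sub>R x + v *\<^sub>R y) $ s" using x y uv by (auto simp: pstate_def)
  next
    fix i
    have "(\<Sum>s\<in>{s. pop s = i}. (u *\<^sub>R x + v *\<^sub>R y) $ s)
        = u * (\<Sum>s\<in>{s. pop s = i}. x $ s) + v * (\<Sum>s\<in>{s. pop s = i}. y $ s)"
      by (simp add: sum.distrib sum_distrib_left)
    also have "\<dots> = 1" using x y uv by (simp add: pstate_def)
    finally show "(\<Sum>s\<in>{s. pop s = i}. (u *\<^sub>R x + v *\<^sub>R y) $ s) = 1" .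
  qed
qed

definition cent :: "('s::finite \<Rightarrow> 'i) \<Rightarrow> real^'s" where
  "cent pop = (\<chi> s. 1 / real (card {t. pop t = pop s}))"

lemma cent_int: assumes "surj pop" shows "cent pop \<in> pstate_int pop"
proof -
  have card: "card {t. pop t = i} > 0" for i
  proof -
    obtain s where "pop s = i" using assms by (metis surjD)
    then show ?thesis by (auto simp: card_gt_0_iff)
  qed
  have pos: "0 < cent pop $ s" for s using card[of "pop s"] by (simp add: cent_def)
  have "(\<Sum>s\<in>{s. pop s = i}. cent pop $ s) = 1" for i
  proof -
    have "(\<Sum>s\<in>{s. pop s = i}. cent pop $ s) = (\<Sum>s\<in>{s. pop s = i}. 1 / real (card {t. pop t = i}))"
      by (rule sum.cong) (auto simp: cent_def)
    also have "\<dots> = 1" using card[of i] by (simp; metis assms surjD)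
    finally show ?thesis .
  qed
  then show ?thesis using pos by (auto simp: pstate_int_def pstate_def less_imp_le)
qed

lemma pstate_ne: "surj pop \<Longrightarrow> pstate pop \<noteq> {}"
  using cent_int by (auto simp: pstate_int_def)

lemma pstate_int_convex_comb:
  assumes "a \<in> pstate_int pop" "b \<in> pstate_int pop" "0 \<le> r" "r \<le> 1"
  shows "r *\<^sub>R a + (1 - r) *\<^sub>R b \<in> pstate_int pop"
proof -
  have "r *\<^sub>R a + (1 - r) *\<^sub>R b \<in> pstate pop"
    using pstate_convex[of pop] assms unfolding convex_def pstate_int_def by auto
  moreover have "0 < (r *\<^sub>R a + (1 - r) *\<^sub>R b) $ s" for s
  proof (cases "r = 0")
    case True then show ?thesis using assms by (simp add: pstate_int_def)
  next
    case False
    then have "0 < r * a$s" using assms by (simp add: pstate_int_def)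
    moreover have "0 \<le> (1-r) * b$s" using assms by (simp add: pstate_int_def less_imp_le)
    ultimately show ?thesis by simp
  qed
  ultimately show ?thesis by (simp add: pstate_int_def)
qed

lemma sum_gexcess:
  assumes "x \<in> pstate pop"
  shows "(\<Sum>t\<in>{t. pop t = i}. x$t * gexcess pop f t x) = 0"
proof -
  have "(\<Sum>t\<in>{t. pop t = i}. x$t * gexcess pop f t x)
      = (\<Sum>t\<in>{t. pop t = i}. x$t * f x $ t - x$t * avg_payoff pop f i x)"
    by (rule sum.cong) (auto simp: gexcess_def right_diff_distrib)
  also have "\<dots> = avg_payoff pop f i x - (\<Sum>t\<in>{t. pop t = i}. x$t) * avg_payoff pop f i x"
    by (simp add: sum_subtractf sum_distrib_right avg_payoff_def)
  also have "\<dots> = 0" using assms by (simp add: pstate_def)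
  finally show ?thesis .
qed

lemma gexcess_cont:
  assumes "continuous_on S f"
  shows "continuous_on S (gexcess pop f s)"
  unfolding gexcess_def[abs_def] avg_payoff_def
  by (intro continuous_intros assms)


lemma exists_zero:
  fixes pop :: "'s::finite \<Rightarrow> 'i"
  assumes sp: "surj pop" and contf: "continuous_on (pstate pop) f"
    and contc: "continuous_on (pstate pop) cf" and cfim: "\<And>x. x\<in>pstate pop \<Longrightarrow> cf x \<in> pstate pop"
    and M: "0 < M"
  shows "\<exists>y\<in>pstate pop. mfz pop f M cf y = 0"
proof -
  define h where "h x = (\<Sum>s\<in>UNIV. \<bar>gexcess pop f s x\<bar>)" for x
  have conth: "continuous_on (pstate pop) h"
    unfolding h_def by (intro continuous_intros gexcess_cont contf)
  obtain x0 where x0: "x0 \<in> pstate pop" "\<And>y. y \<in> pstate pop \<Longrightarrow> h y \<le> h x0"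
    using continuous_attains_sup[OF pstate_compact pstate_ne[OF sp] conth] by blast
  define B where "B = h x0"
  have B0: "0 \<le> B" unfolding B_def h_def by (simp add: sum_nonneg)
  have gb: "\<bar>gexcess pop f s y\<bar> \<le> B" if "y \<in> pstate pop" for s y
  proof -
    have "\<bar>gexcess pop f s y\<bar> \<le> h y" unfolding h_def by (rule member_le_sum) auto
    also have "\<dots> \<le> B" using x0 that B_def by auto
    finally show ?thesis .
  qed
  define e where "e = 1/(B+M+1)"
  have e0: "0 < e" using B0 M by (simp add: e_def)
  have e1: "e * (B + M) \<le> 1" using B0 M by (simp add: e_def field_simps)
  define T where "T x = x + e *\<^sub>R mfz pop f M cf x" for x
  have Tcomp: "T y $ s = y$s + e * (y$s * gexcess pop f s y) + e * M * (cf y $ s) - e * M * y$s" for y s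
    by (simp add: T_def mfz_def algebra_simps)
  have TD: "T y \<in> pstate pop" if y: "y \<in> pstate pop" for y
    unfolding pstate_def
  proof (intro CollectI conjI allI)
    fix s
    have ys: "0 \<le> y$s" "0 \<le> cf y $ s" using y cfim[OF y] by (auto simp: pstate_def)
    have "e * \<bar>gexcess pop f s y\<bar> \<le> e * B" using gb[OF y] e0 by (simp add: mult_left_mono)
    moreover have "- \<bar>gexcess pop f s y\<bar> \<le> gexcess pop f s y" by simp
    ultimately have "0 \<le> 1 + e * gexcess pop f s y - e * M" using e1 e0
      by (smt (verit, best) distrib_left mult_minus_right mult_left_mono)
    then have "0 \<le> y$s * (1 + e * gexcess pop f s y - e * M)" using ys by simp
    moreover have "0 \<le> e * M * (cf y $ s)" using e0 M ys by simp
    moreover have "T y $ s = y$s * (1 + e * gexcess pop f s y - e * M) + e * M * (cf y $ s)"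
      by (simp add: Tcomp algebra_simps)
    ultimately show "0 \<le> T y $ s" by simp
  next
    fix i
    have "(\<Sum>s\<in>{s. pop s = i}. T y $ s) = (\<Sum>s\<in>{s. pop s = i}. y$s) + e * (\<Sum>s\<in>{s. pop s = i}. y$s * gexcess pop f s y)
       + e * M * (\<Sum>s\<in>{s. pop s = i}. cf y $ s) - e * M * (\<Sum>s\<in>{s. pop s = i}. y$s)"
      by (simp add: Tcomp sum.distrib sum_subtractf sum_distrib_left)
    also have "\<dots> = 1" using y cfim[OF y] sum_gexcess[OF y] by (simp add: pstate_def)
    finally show "(\<Sum>s\<in>{s. pop s = i}. T y $ s) = 1" .
  qed
  have contT: "continuous_on (pstate pop) T"
    unfolding T_def mfz_def by (intro continuous_intros gexcess_cont contf contc)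
  obtain y where y: "y \<in> pstate pop" "T y = y"
    using brouwer[OF pstate_compact pstate_convex pstate_ne[OF sp] contT] TD by blast
  then have "e *\<^sub>R mfz pop f M cf y = 0" by (simp add: T_def)
  then show ?thesis using y e0 by auto
qed



definition ZF :: "('s::finite \<Rightarrow> 'i) \<Rightarrow> (real^'s \<Rightarrow> real^'s) \<Rightarrow> (real^'s \<Rightarrow> real^'s) \<Rightarrow> real \<Rightarrow> real^'s \<Rightarrow> bool" where
  "ZF pop f cf M y \<longleftrightarrow> y \<in> pstate pop \<and> mfz pop f M cf y = 0"

lemma zero_lim_nash:
  fixes pop :: "'s::finite \<Rightarrow> 'i"
  assumes contf: "continuous_on (pstate pop) f" and cfim: "\<And>x. x\<in>pstate pop \<Longrightarrow> cf x \<in> pstate_int pop"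
  shows "zero_lim (ZF pop f cf) \<subseteq> nash_set pop f"
proof
  fix x assume "x \<in> zero_lim (ZF pop f cf)"
  then obtain xs Ms where Z: "\<And>n. 0 < Ms n \<and> ZF pop f cf (Ms n) (xs n)" and M: "Ms \<longlonglongrightarrow> 0" and xl: "xs \<longlonglongrightarrow> x"
    unfolding zero_lim_def by blast
  have xsD: "xs n \<in> pstate pop" for n using Z by (simp add: ZF_def)
  have xD: "x \<in> pstate pop" using closed_sequentially[OF pstate_closed xsD xl] .
  have "gexcess pop f s x \<le> 0" for s
  proof -
    have lt: "gexcess pop f s (xs n) \<le> Ms n" for n
    proof (rule ccontr)
      assume "\<not> ?thesis"
      then have "0 \<le> xs n $ s * (gexcess pop f s (xs n) - Ms n)"
        using xsD[of n] by (intro mult_nonneg_nonneg) (auto simp: pstate_def)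
      moreover have "0 < Ms n * (cf (xs n) $ s)" using Z[of n] cfim[OF xsD[of n]] by (simp add: pstate_int_def)
      moreover have "mfz pop f (Ms n) cf (xs n) $ s = 0" using Z[of n] by (simp add: ZF_def)
      then have "xs n $ s * gexcess pop f s (xs n) + Ms n * (cf (xs n) $ s - xs n $ s) = 0"
        by (simp add: mfz_def)
      ultimately show False by (simp add: algebra_simps)
    qed
    have "(\<lambda>n. gexcess pop f s (xs n)) \<longlonglongrightarrow> gexcess pop f s x"
      by (rule continuous_on_tendsto_compose[OF gexcess_cont[OF contf] xl xD]) (simp add: xsD)
    then show ?thesis using M lt by (intro LIMSEQ_le) auto
  qed
  then show "x \<in> nash_set pop f" using xD by (simp add: nash_set_def)
qed

lemma zero_lim_hit:
  fixes pop :: "'s::finite \<Rightarrow> 'i"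
  assumes sp: "surj pop" and contf: "continuous_on (pstate pop) f"
    and contc: "continuous_on (pstate pop) cf" and cfim: "\<And>x. x\<in>pstate pop \<Longrightarrow> cf x \<in> pstate_int pop"
  shows "nash_set pop f \<inter> zero_lim (ZF pop f cf) \<noteq> {}"
proof -
  have "\<forall>n. \<exists>y. ZF pop f cf (1/Suc n) y"
  proof
    fix n :: nat
    have "\<exists>y\<in>pstate pop. mfz pop f (1/Suc n) cf y = 0"
      by (rule exists_zero[OF sp contf contc]) (use cfim in \<open>auto simp: pstate_int_def\<close>)
    then show "\<exists>y. ZF pop f cf (1/Suc n) y" by (auto simp: ZF_def)
  qed
  then obtain ys where ys: "\<And>n. ZF pop f cf (1/Suc n) (ys n)" unfolding choice_iff by blast
  then have "ys n \<in> pstate pop" for n by (simp add: ZF_def)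
  then obtain l r where l: "l \<in> pstate pop" "strict_mono r" "(ys \<circ> r) \<longlonglongrightarrow> l"
    using pstate_compact[of pop] unfolding compact_def by metis
  have lim0: "(\<lambda>n. 1/real (Suc n)) \<longlonglongrightarrow> 0"
    using LIMSEQ_inverse_real_of_nat by (simp add: inverse_eq_divide)
  have "(\<lambda>n. 1/real (Suc (r n))) \<longlonglongrightarrow> 0"
    using LIMSEQ_subseq_LIMSEQ[OF lim0 l(2)] by (simp add: o_def)
  then have "l \<in> zero_lim (ZF pop f cf)"
    unfolding zero_lim_def using ys l(3)
    by (intro CollectI exI[of _ "ys \<circ> r"] exI[of _ "\<lambda>n. 1/real (Suc (r n))"]) auto
  moreover have "l \<in> nash_set pop f" using zero_lim_nash[where cf=cf, OF contf cfim] calculation by blast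
  ultimately show ?thesis by blast
qed



lemma zero_lim_eventually:
  assumes ev: "eventually (\<lambda>n. 0 < Ms n \<and> Z (Ms n) (xs n)) sequentially"
    and M: "Ms \<longlonglongrightarrow> 0" and x: "xs \<longlonglongrightarrow> x"
  shows "x \<in> zero_lim Z"
proof -
  obtain N where N: "\<And>n. n \<ge> N \<Longrightarrow> 0 < Ms n \<and> Z (Ms n) (xs n)"
    using ev unfolding eventually_sequentially by blast
  have "(\<lambda>n. Ms (n + N)) \<longlonglongrightarrow> 0" using M by (rule LIMSEQ_ignore_initial_segment)
  moreover have "(\<lambda>n. xs (n + N)) \<longlonglongrightarrow> x" using x by (rule LIMSEQ_ignore_initial_segment)
  moreover have "\<forall>n. 0 < Ms (n + N) \<and> Z (Ms (n + N)) (xs (n + N))" using N by simp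
  ultimately show ?thesis unfolding zero_lim_def
    by (intro CollectI exI[of _ "\<lambda>n. xs (n + N)"] exI[of _ "\<lambda>n. Ms (n + N)"]) auto
qed

lemma approachable_iff:
  "approachable pop f X \<longleftrightarrow> (\<forall>c\<in>pstate_int pop. X \<inter> zero_lim (ZF pop f (\<lambda>_. c)) \<noteq> {})"
  unfolding approachable_def mutation_eq_seq_def zero_lim_def ZF_def mfz_const
  by (intro ball_cong refl) blast

lemma zero_lim_transfer:
  assumes "x \<in> zero_lim (ZF pop f cf)"
    and P: "\<And>xs. xs \<longlonglongrightarrow> x \<Longrightarrow> eventually (\<lambda>n. cf (xs n) = cf1 (xs n)) sequentially"
  shows "x \<in> zero_lim (ZF pop f cf1)"
proof -
  obtain xs Ms where Z: "\<And>n. 0 < Ms n \<and> ZF pop f cf (Ms n) (xs n)" and M: "Ms \<longlonglongrightarrow> 0" and xl: "xs \<longlonglongrightarrow> x"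
    using assms(1) unfolding zero_lim_def by blast
  have "eventually (\<lambda>n. 0 < Ms n \<and> ZF pop f cf1 (Ms n) (xs n)) sequentially"
    using P[OF xl]
  proof (rule eventually_mono)
    fix n assume "cf (xs n) = cf1 (xs n)"
    then show "0 < Ms n \<and> ZF pop f cf1 (Ms n) (xs n)" using Z[of n] by (simp add: ZF_def mfz_def)
  qed
  then show ?thesis using M xl by (rule zero_lim_eventually)
qed



theorem mainTheorem7:
  fixes pop :: "'s::finite \<Rightarrow> 'i"
    and f :: "real^'s \<Rightarrow> real^'s"
    and f' :: "real^'s \<Rightarrow> ((real^'s) \<Rightarrow>\<^sub>L (real^'s))"
    and U :: "(real^'s) set"
  assumes "surj pop"
    and "open U" and "pstate pop \<subseteq> U"
    and "\<And>x. x \<in> U \<Longrightarrow> (f has_derivative blinfun_apply (f' x)) (at x)"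
    and "continuous_on U f'"
  shows "\<exists>X. mutation_limit pop f X \<and> (\<exists>C \<in> components (nash_set pop f). X \<subseteq> C)"
proof -
  note sp = assms(1)
  let ?D = "pstate pop"
  let ?N = "nash_set pop f"
  have contf: "continuous_on ?D f"
    using assms(3,4) by (intro continuous_at_imp_continuous_on ballI has_derivative_continuous) blast
  define CF where "CF = {cf. continuous_on ?D cf \<and> (\<forall>x\<in>?D. cf x \<in> pstate_int pop)}"
  define LL where "LL = (\<lambda>cf. zero_lim (ZF pop f cf)) ` CF"
  have constCF: "(\<lambda>_. c) \<in> CF" if "c \<in> pstate_int pop" for c
    using that by (simp add: CF_def)
  have NsubD: "?N \<subseteq> ?D" by (auto simp: nash_set_def)
  have Nclosed: "closed ?N"
  proof -
    have "?N = (\<Inter>s. {x\<in>?D. gexcess pop f s x \<le> (\<lambda>_. 0) x})" by (auto simp: nash_set_def)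
    moreover have "closed {x\<in>?D. gexcess pop f s x \<le> (\<lambda>_. 0) x}" for s
      by (rule continuous_on_closed_Collect_le[OF gexcess_cont[OF contf] continuous_on_const pstate_closed])
    ultimately show ?thesis by auto
  qed
  have Ncomp: "compact ?N"
    using NsubD Nclosed pstate_compact[of pop] by (metis compact_Int_closed inf.absorb_iff2)
  have hitN: "?N \<inter> L \<noteq> {}" if "L \<in> LL" for L
  proof -
    from that obtain cf where cf: "cf \<in> CF" "L = zero_lim (ZF pop f cf)" by (auto simp: LL_def)
    then show ?thesis using zero_lim_hit[OF sp contf, of cf] by (simp add: CF_def)
  qed
  have "zero_lim (ZF pop f (\<lambda>_. cent pop)) \<in> LL" using constCF[OF cent_int[OF sp]] by (simp add: LL_def)
  then have Nne: "?N \<noteq> {}" using hitN by blast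
  have LLc: "closed L" if "L \<in> LL" for L using that closed_zero_lim by (auto simp: LL_def)
  have "\<exists>X. X \<subseteq> ?N \<and> X\<noteq>{} \<and> compact X \<and> True \<and> (\<forall>L\<in>LL. X\<inter>L\<noteq>{}) \<and>
     (\<forall>Y. Y \<subseteq> X \<and> Y \<noteq>{} \<and> compact Y \<and> True \<and> (\<forall>L\<in>LL. Y\<inter>L\<noteq>{}) \<longrightarrow> Y = X)"
    by (rule minimal_hitting[where Q="\<lambda>_. True", OF Ncomp Nne _ LLc hitN]) simp_all
  then obtain X0 where X0: "X0 \<subseteq> ?N" "X0 \<noteq> {}" "compact X0" "\<forall>L\<in>LL. X0 \<inter> L \<noteq> {}"
    and X0min': "\<forall>Y. Y \<subseteq> X0 \<and> Y \<noteq>{} \<and> compact Y \<and> True \<and> (\<forall>L\<in>LL. Y\<inter>L\<noteq>{}) \<longrightarrow> Y = X0"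
    by blast
  have X0min: "Y = X0" if "Y \<subseteq> X0" "Y \<noteq> {}" "compact Y" "\<forall>L\<in>LL. Y \<inter> L \<noteq> {}" for Y
    using X0min' that by blast
  have X0conn: "connected X0"
  proof -
    have "closed X0" using X0 compact_imp_closed by blast
    moreover have "\<not> (closed A \<and> closed B \<and> A \<noteq> {} \<and> B \<noteq> {} \<and> A \<union> B = X0 \<and> A \<inter> B = {})" for A B
    proof
      assume AB: "closed A \<and> closed B \<and> A \<noteq> {} \<and> B \<noteq> {} \<and> A \<union> B = X0 \<and> A \<inter> B = {}"
      have cA: "compact A" using AB X0(3) by (metis Un_upper1 compact_Int_closed inf.absorb_iff2)
      have cB: "compact B" using AB X0(3) by (metis Un_upper2 compact_Int_closed inf.absorb_iff2)
      have "A \<noteq> X0" using AB by blast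
      then obtain L1 where L1: "L1 \<in> LL" "A \<inter> L1 = {}" using X0min[of A] AB cA by blast
      have "B \<noteq> X0" using AB by blast
      then obtain L2 where L2: "L2 \<in> LL" "B \<inter> L2 = {}" using X0min[of B] AB cB by blast
      obtain cf1 where cf1: "cf1 \<in> CF" "L1 = zero_lim (ZF pop f cf1)" using L1 by (auto simp: LL_def)
      obtain cf2 where cf2: "cf2 \<in> CF" "L2 = zero_lim (ZF pop f cf2)" using L2 by (auto simp: LL_def)
      define d where "d = setdist A B"
      have d0: "0 < d" unfolding d_def using cA AB by (subst setdist_gt_0_compact_closed) auto
      define \<rho> where "\<rho> x = max 0 (min 1 (2 - 3 * infdist x A / d))" for x
      define cf where "cf x = \<rho> x *\<^sub>R cf1 x + (1 - \<rho> x) *\<^sub>R cf2 x" for x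
      have cfCF: "cf \<in> CF"
        unfolding CF_def
      proof (intro CollectI conjI ballI)
        show "continuous_on ?D cf" unfolding cf_def \<rho>_def
          using cf1 cf2 d0 by (intro continuous_intros) (auto simp: CF_def)
        fix x assume "x \<in> ?D"
        then show "cf x \<in> pstate_int pop" unfolding cf_def
          using cf1 cf2 by (intro pstate_int_convex_comb) (auto simp: CF_def \<rho>_def)
      qed
      obtain x where x: "x \<in> X0" "x \<in> zero_lim (ZF pop f cf)"
        using X0(4) cfCF by (auto simp: LL_def)
      show False
      proof (cases "x \<in> A")
        case True
        have "x \<in> zero_lim (ZF pop f cf1)"
        proof (rule zero_lim_transfer[OF x(2)])
          fix xs assume "xs \<longlonglongrightarrow> x"
          then have "(\<lambda>n. infdist (xs n) A) \<longlonglongrightarrow> infdist x A" by (rule tendsto_infdist)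
          moreover have "infdist x A < d/3" using True d0 by simp
          ultimately have "eventually (\<lambda>n. infdist (xs n) A < d/3) sequentially"
            by (rule order_tendstoD)
          then show "eventually (\<lambda>n. cf (xs n) = cf1 (xs n)) sequentially"
          proof (rule eventually_mono)
            fix n assume "infdist (xs n) A < d/3"
            then have "1 < 2 - 3 * infdist (xs n) A / d" using d0 by (simp add: field_simps)
            then have "\<rho> (xs n) = 1" by (simp add: \<rho>_def)
            then show "cf (xs n) = cf1 (xs n)" by (simp add: cf_def)
          qed
        qed
        then show False using L1 cf1 True by blast
      next
        case False
        then have xB: "x \<in> B" using AB x(1) by blast
        have "x \<in> zero_lim (ZF pop f cf2)"
        proof (rule zero_lim_transfer[OF x(2)])
          fix xs assume "xs \<longlonglongrightarrow> x"
          then have "(\<lambda>n. infdist (xs n) A) \<longlonglongrightarrow> infdist x A" by (rule tendsto_infdist)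
          moreover have "d \<le> infdist x A"
          proof -
            have "setdist B A \<le> setdist {x} A" using xB by (intro setdist_subset_left) auto
            then show ?thesis by (simp add: d_def infdist_eq_setdist setdist_sym)
          qed
          then have "2*d/3 < infdist x A" using d0 by simp
          ultimately have "eventually (\<lambda>n. 2*d/3 < infdist (xs n) A) sequentially"
            by (rule order_tendstoD)
          then show "eventually (\<lambda>n. cf (xs n) = cf2 (xs n)) sequentially"
          proof (rule eventually_mono)
            fix n assume "2*d/3 < infdist (xs n) A"
            then have "2 - 3 * infdist (xs n) A / d < 0" using d0 by (simp add: field_simps)
            then have "\<rho> (xs n) = 0" by (simp add: \<rho>_def)
            then show "cf (xs n) = cf2 (xs n)" by (simp add: cf_def)
          qed
        qed
        then show False using L2 cf2 xB by blast
      qed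
    qed
    ultimately show ?thesis using connected_closed_set by blast
  qed
  define LL2 where "LL2 = (\<lambda>c. zero_lim (ZF pop f (\<lambda>_. c))) ` pstate_int pop"
  have hitX0: "X0 \<inter> L \<noteq> {}" if "L \<in> LL2" for L
    using that X0(4) constCF by (auto simp: LL2_def LL_def)
  obtain Y where Y: "Y \<subseteq> X0" "Y \<noteq> {}" "compact Y" "connected Y" "\<forall>L\<in>LL2. Y \<inter> L \<noteq> {}"
    and Ymin: "\<And>Z. Z \<subseteq> Y \<Longrightarrow> Z \<noteq> {} \<Longrightarrow> compact Z \<Longrightarrow> connected Z \<Longrightarrow> (\<forall>L\<in>LL2. Z \<inter> L \<noteq> {}) \<Longrightarrow> Z = Y"
  proof -
    have "\<exists>X. X \<subseteq> X0 \<and> X\<noteq>{} \<and> compact X \<and> connected X \<and> (\<forall>L\<in>LL2. X\<inter>L\<noteq>{}) \<and>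
     (\<forall>Y. Y \<subseteq> X \<and> Y \<noteq>{} \<and> compact Y \<and> connected Y \<and> (\<forall>L\<in>LL2. Y\<inter>L\<noteq>{}) \<longrightarrow> Y = X)"
    proof (rule minimal_hitting[where Q=connected, OF X0(3) X0(2) X0conn _ hitX0])
      show "closed L" if "L \<in> LL2" for L using that closed_zero_lim by (auto simp: LL2_def)
    next
      fix F :: "(real^'s) set set"
      assume F: "F \<noteq> {}" "\<And>S. S \<in> F \<Longrightarrow> compact S \<and> connected S" "\<And>S T. S\<in>F \<Longrightarrow> T\<in>F \<Longrightarrow> S\<subseteq>T \<or> T\<subseteq>S"
      then obtain S where S: "S \<in> F" by blast
      show "connected (\<Inter>F)"
      proof (rule connected_chain_gen[of S F])
        show "S \<in> F" by (fact S)
        show "compact S" using F(2)[OF S] by simp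
        show "closed T \<and> connected T" if "T \<in> F" for T using F(2)[OF that] compact_imp_closed by blast
        show "S \<subseteq> T \<or> T \<subseteq> S" if "S \<in> F \<and> T \<in> F" for S T using F(3) that by simp
      qed
    qed
    then obtain X where hx: "X \<subseteq> X0" "X\<noteq>{}" "compact X" "connected X" "\<forall>L\<in>LL2. X\<inter>L\<noteq>{}"
      "\<forall>Y. Y \<subseteq> X \<and> Y \<noteq>{} \<and> compact Y \<and> connected Y \<and> (\<forall>L\<in>LL2. Y\<inter>L\<noteq>{}) \<longrightarrow> Y = X"
      by blast
    show ?thesis by (rule that[of X]) (use hx in auto)
  qed
  have appY: "approachable pop f Y" using Y(5) by (auto simp: approachable_iff LL2_def)
  have "mutation_limit pop f Y"
    unfolding mutation_limit_def
  proof (intro conjI allI impI)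
    show "Y \<noteq> {}" "connected Y" "compact Y" "approachable pop f Y" by (fact Y appY)+
    show "Y \<subseteq> ?D" using Y(1) X0(1) NsubD by blast
  next
    fix Z assume Z: "Z \<subset> Y \<and> connected Z \<and> compact Z"
    show "\<not> approachable pop f Z"
    proof
    assume aZ: "approachable pop f Z"
    have hZ: "\<forall>L\<in>LL2. Z \<inter> L \<noteq> {}" using aZ by (auto simp: approachable_iff LL2_def)
    moreover have "Z \<noteq> {}" using hZ cent_int[OF sp] by (auto simp: LL2_def)
    ultimately have "Z = Y" using Ymin Z by blast
    then show False using Z by blast
  qed
  qed
  moreover have "\<exists>C \<in> components ?N. Y \<subseteq> C"
    using exists_component_superset[of Y ?N] Y X0(1) Nne by blast
  ultimately show ?thesis by blast
qed


end
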